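(* Let $A$ be an integral residuated $\vee$-semilattice. Then: (1) $A$ is a $\to$-MTL-algebra if and only if the set of $\to$-prime filters of $A$ equals the set of $\vee$-prime filters of $A$; (2) $A$ is a $\leadsto$-MTL-algebra if and only if the set of $\leadsto$-prime filters of $A$ equals the set of $\vee$-prime filters of $A$; (3) $A$ is a pseudo MTL-algebra if and only if the set of prime filters of $A$ equals the set of $\vee$-prime filters of $A$.
   Context: A residuated poset is a partially ordered semigroup $(A;\cdot,\le)$ with binary operations $\to,\leadsto$ such that $x\cdot y\le z$ iff $x\le y\to z$ iff $y\le x\leadsto z$ for all $x,y,z$. It is a residuated $\vee$-semilattice if $(A,\le)$ is a join-semilattice (every pair has a supremum $x\vee y$). It is integral if it has a greatest element $1$ which is a multiplicative identity ($1\cdot x=x\cdot 1=x$). A filter of $A$ is a nonempty subset $F$ that is upward closed and closed under $\cdot$. A filter $F$ is $\to$-prime if for all $x,y\in A$, $x\to y\in F$ or $y\to x\in F$; $\leadsto$-prime if for all $x,y$, $x\leadsto y\in F$ or $y\leadsto x\in F$; prime if it is both $\to$-prime and $\leadsto$-prime; $\vee$-prime if $x\vee y\in F$ implies $x\in F$ or $y\in F$. $A$ is a $\to$-MTL-algebra if $(x\to y)\vee(y\to x)=1$ for all $x,y$; a $\leadsto$-MTL-algebra if $(x\leadsto y)\vee(y\leadsto x)=1$ for all $x,y$; a pseudo MTL-algebra if it is both. *)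

theory Defs
  imports Main
begin

text \<open>The carrier is the whole type 'a; the order is the type-class order, joins are sup,
  and the greatest element 1 is top. Multiplication m, right residual r (x \<cdot> y \<le> z iff
  x \<le> r y z, i.e. r y z = y \<rightarrow> z) and left residual l (x \<cdot> y \<le> z iff y \<le> l x z,
  i.e. l x z = x \<leadsto> z) are explicit parameters.\<close>

definition integral_residuated_sup_semilattice ::
  "('a::{semilattice_sup,order_top} \<Rightarrow> 'a \<Rightarrow> 'a) \<Rightarrow> ('a \<Rightarrow> 'a \<Rightarrow> 'a) \<Rightarrow> ('a \<Rightarrow> 'a \<Rightarrow> 'a) \<Rightarrow> bool" where
  "integral_residuated_sup_semilattice m r l \<longleftrightarrow>
     (\<forall>x y z. m (m x y) z = m x (m y z)) \<and>
     (\<forall>x y z. x \<le> y \<longrightarrow> m x z \<le> m y z \<and> m z x \<le> m z y) \<and>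
     (\<forall>x y z. (m x y \<le> z \<longleftrightarrow> x \<le> r y z) \<and> (m x y \<le> z \<longleftrightarrow> y \<le> l x z)) \<and>
     (\<forall>x. m top x = x \<and> m x top = x)"

definition is_filter :: "('a::order \<Rightarrow> 'a \<Rightarrow> 'a) \<Rightarrow> 'a set \<Rightarrow> bool" where
  "is_filter m F \<longleftrightarrow> F \<noteq> {} \<and> (\<forall>x y. x \<in> F \<and> x \<le> y \<longrightarrow> y \<in> F) \<and>
     (\<forall>x y. x \<in> F \<and> y \<in> F \<longrightarrow> m x y \<in> F)"

definition r_prime_filter :: "('a::order \<Rightarrow> 'a \<Rightarrow> 'a) \<Rightarrow> ('a \<Rightarrow> 'a \<Rightarrow> 'a) \<Rightarrow> 'a set \<Rightarrow> bool" where
  "r_prime_filter m r F \<longleftrightarrow> is_filter m F \<and> (\<forall>x y. r x y \<in> F \<or> r y x \<in> F)"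

definition l_prime_filter :: "('a::order \<Rightarrow> 'a \<Rightarrow> 'a) \<Rightarrow> ('a \<Rightarrow> 'a \<Rightarrow> 'a) \<Rightarrow> 'a set \<Rightarrow> bool" where
  "l_prime_filter m l F \<longleftrightarrow> is_filter m F \<and> (\<forall>x y. l x y \<in> F \<or> l y x \<in> F)"

definition prime_filter :: "('a::order \<Rightarrow> 'a \<Rightarrow> 'a) \<Rightarrow> ('a \<Rightarrow> 'a \<Rightarrow> 'a) \<Rightarrow> ('a \<Rightarrow> 'a \<Rightarrow> 'a) \<Rightarrow> 'a set \<Rightarrow> bool" where
  "prime_filter m r l F \<longleftrightarrow> r_prime_filter m r F \<and> l_prime_filter m l F"

definition sup_prime_filter :: "('a::semilattice_sup \<Rightarrow> 'a \<Rightarrow> 'a) \<Rightarrow> 'a set \<Rightarrow> bool" where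
  "sup_prime_filter m F \<longleftrightarrow> is_filter m F \<and> (\<forall>x y. sup x y \<in> F \<longrightarrow> x \<in> F \<or> y \<in> F)"

definition r_MTL :: "('a::{semilattice_sup,order_top} \<Rightarrow> 'a \<Rightarrow> 'a) \<Rightarrow> bool" where
  "r_MTL r \<longleftrightarrow> (\<forall>x y. sup (r x y) (r y x) = top)"

definition l_MTL :: "('a::{semilattice_sup,order_top} \<Rightarrow> 'a \<Rightarrow> 'a) \<Rightarrow> bool" where
  "l_MTL l \<longleftrightarrow> (\<forall>x y. sup (l x y) (l y x) = top)"

definition pseudo_MTL :: "('a::{semilattice_sup,order_top} \<Rightarrow> 'a \<Rightarrow> 'a) \<Rightarrow> ('a \<Rightarrow> 'a \<Rightarrow> 'a) \<Rightarrow> bool" where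
  "pseudo_MTL r l \<longleftrightarrow> r_MTL r \<and> l_MTL l"

end

theory Submission
  imports Defs
begin

fun mpow :: "('a::order_top \<Rightarrow> 'a \<Rightarrow> 'a) \<Rightarrow> 'a \<Rightarrow> nat \<Rightarrow> 'a" where
  "mpow m t 0 = top"
| "mpow m t (Suc n) = m t (mpow m t n)"

context
  fixes m r l :: "'a::{semilattice_sup,order_top} \<Rightarrow> 'a \<Rightarrow> 'a"
  assumes A: "integral_residuated_sup_semilattice m r l"
begin

lemma assoc: "m (m x y) z = m x (m y z)"
  using A unfolding integral_residuated_sup_semilattice_def by blast

lemma monoL: "x \<le> y \<Longrightarrow> m x z \<le> m y z"
  using A unfolding integral_residuated_sup_semilattice_def by blast

lemma monoR: "x \<le> y \<Longrightarrow> m z x \<le> m z y"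
  using A unfolding integral_residuated_sup_semilattice_def by blast

lemma resr: "m x y \<le> z \<longleftrightarrow> x \<le> r y z"
  using A unfolding integral_residuated_sup_semilattice_def by blast

lemma resl: "m x y \<le> z \<longleftrightarrow> y \<le> l x z"
  using A unfolding integral_residuated_sup_semilattice_def by blast

lemma topL[simp]: "m top x = x"
  using A unfolding integral_residuated_sup_semilattice_def by blast

lemma topR[simp]: "m x top = x"
  using A unfolding integral_residuated_sup_semilattice_def by blast

lemma int1: "m x y \<le> x"
proof -
  have "m x y \<le> m x top" by (rule monoR) simp
  then show ?thesis by (simp only: topR)
qed

lemma int2: "m x y \<le> y"
proof -
  have "m x y \<le> m top y" by (rule monoL) simp
  then show ?thesis by (simp only: topL)
qed

lemma suptop1[simp]: "sup top (x::'a) = top"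
  by (rule sup_absorb1) simp

lemma suptop2[simp]: "sup (x::'a) top = top"
  by (rule sup_absorb2) simp

lemma supL: "m (sup a b) c = sup (m a c) (m b c)"
proof (rule antisym)
  have "m a c \<le> sup (m a c) (m b c)" "m b c \<le> sup (m a c) (m b c)" by simp_all
  then have "a \<le> r c (sup (m a c) (m b c))" "b \<le> r c (sup (m a c) (m b c))"
    by (simp_all only: resr)
  then have "sup a b \<le> r c (sup (m a c) (m b c))" by (rule sup_least)
  then show "m (sup a b) c \<le> sup (m a c) (m b c)" by (simp only: resr)
  show "sup (m a c) (m b c) \<le> m (sup a b) c" by (intro sup_least monoL) simp_all
qed

lemma supR: "m c (sup a b) = sup (m c a) (m c b)"
proof (rule antisym)
  have "m c a \<le> sup (m c a) (m c b)" "m c b \<le> sup (m c a) (m c b)" by simp_all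
  then have "a \<le> l c (sup (m c a) (m c b))" "b \<le> l c (sup (m c a) (m c b))"
    by (simp_all only: resl)
  then have "sup a b \<le> l c (sup (m c a) (m c b))" by (rule sup_least)
  then show "m c (sup a b) \<le> sup (m c a) (m c b)" by (simp only: resl)
  show "sup (m c a) (m c b) \<le> m c (sup a b)" by (intro sup_least monoR) simp_all
qed

lemma filter_top: "is_filter m F \<Longrightarrow> top \<in> F"
proof -
  assume F: "is_filter m F"
  then obtain x where "x \<in> F" unfolding is_filter_def by auto
  moreover have "x \<le> top" by simp
  ultimately show "top \<in> F" using F unfolding is_filter_def by metis
qed

lemma filter_up: "is_filter m F \<Longrightarrow> x \<in> F \<Longrightarrow> x \<le> y \<Longrightarrow> y \<in> F"
  unfolding is_filter_def by blast

lemma filter_mul: "is_filter m F \<Longrightarrow> x \<in> F \<Longrightarrow> y \<in> F \<Longrightarrow> m x y \<in> F"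
  unfolding is_filter_def by blast

lemma r_prime_sup: "r_prime_filter m r F \<Longrightarrow> sup_prime_filter m F"
  unfolding r_prime_filter_def sup_prime_filter_def
proof (intro conjI allI impI; (elim conjE)?)
  fix x y assume F: "is_filter m F" and P: "\<forall>x y. r x y \<in> F \<or> r y x \<in> F" and s: "sup x y \<in> F"
  have k1: "m (r x y) (sup x y) \<le> y"
    unfolding supR using resr[of "r x y" x y] int2[of "r x y" y] by simp
  have k2: "m (r y x) (sup x y) \<le> x"
    unfolding supR using resr[of "r y x" y x] int2[of "r y x" x] by simp
  from P consider "r x y \<in> F" | "r y x \<in> F" by blast
  then show "x \<in> F \<or> y \<in> F"
  proof cases
    case 1 then show ?thesis using F s k1 unfolding is_filter_def by blast
  next
    case 2 then show ?thesis using F s k2 unfolding is_filter_def by blast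
  qed
qed

lemma l_prime_sup: "l_prime_filter m l F \<Longrightarrow> sup_prime_filter m F"
  unfolding l_prime_filter_def sup_prime_filter_def
proof (intro conjI allI impI; (elim conjE)?)
  fix x y assume F: "is_filter m F" and P: "\<forall>x y. l x y \<in> F \<or> l y x \<in> F" and s: "sup x y \<in> F"
  have k1: "m (sup x y) (l x y) \<le> y"
    unfolding supL using resl[of x "l x y" y] int1[of y "l x y"] by simp
  have k2: "m (sup x y) (l y x) \<le> x"
    unfolding supL using resl[of y "l y x" x] int1[of x "l y x"] by simp
  from P consider "l x y \<in> F" | "l y x \<in> F" by blast
  then show "x \<in> F \<or> y \<in> F"
  proof cases
    case 1 then show ?thesis using F s k1 unfolding is_filter_def by blast
  next
    case 2 then show ?thesis using F s k2 unfolding is_filter_def by blast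
  qed
qed

lemma mpow_add: "mpow m t (n + k) = m (mpow m t n) (mpow m t k)"
  by (induction n) (simp_all add: assoc)

lemma mpow_mono: "t \<le> s \<Longrightarrow> mpow m t n \<le> mpow m s n"
  by (induction n) (simp_all, meson monoL monoR order_trans)

lemma mpow_key: "mpow m (sup X Y) (n + k) \<le> sup (mpow m X n) (mpow m Y k)"
proof -
  have "\<forall>n k. n + k = N \<longrightarrow> mpow m (sup X Y) (n + k) \<le> sup (mpow m X n) (mpow m Y k)" for N
  proof (induction N)
    case 0 then show ?case by simp
  next
    case (Suc N)
    show ?case
    proof (intro allI impI)
      fix n k assume nk: "n + k = Suc N"
      show "mpow m (sup X Y) (n + k) \<le> sup (mpow m X n) (mpow m Y k)"
      proof (cases n)
        case 0 then show ?thesis by simp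
      next
        case (Suc n')
        show ?thesis
        proof (cases k)
          case 0 then show ?thesis by simp
        next
          case (Suc k')
          let ?S = "sup X Y"
          let ?P = "mpow m ?S N"
          have e: "mpow m ?S (n + k) = sup (m X ?P) (m Y ?P)"
            using nk by (simp add: supL)
          have i1: "?P \<le> sup (mpow m X n') (mpow m Y k)"
            using Suc.IH nk \<open>n = Suc n'\<close> by auto
          have i2: "?P \<le> sup (mpow m X n) (mpow m Y k')"
            using Suc.IH nk \<open>k = Suc k'\<close> by auto
          have "m X ?P \<le> sup (m X (mpow m X n')) (m X (mpow m Y k))"
            using monoR[OF i1] supR by simp
          also have "\<dots> \<le> sup (mpow m X n) (mpow m Y k)"
            using int2[of X "mpow m Y k"] \<open>n = Suc n'\<close> by (auto intro: le_supI2)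
          finally have a1: "m X ?P \<le> sup (mpow m X n) (mpow m Y k)" .
          have "m Y ?P \<le> sup (m Y (mpow m X n)) (m Y (mpow m Y k'))"
            using monoR[OF i2] supR by simp
          also have "\<dots> \<le> sup (mpow m X n) (mpow m Y k)"
            using int2[of Y "mpow m X n"] \<open>k = Suc k'\<close> by (auto intro: le_supI1)
          finally have a2: "m Y ?P \<le> sup (mpow m X n) (mpow m Y k)" .
          show ?thesis using e a1 a2 by simp
        qed
      qed
    qed
  qed
  then show ?thesis by blast
qed

lemma mpow_in: "is_filter m F \<Longrightarrow> t \<in> F \<Longrightarrow> mpow m t n \<in> F"
  by (induction n) (auto simp: filter_top, auto simp: is_filter_def)

definition gen :: "'a set \<Rightarrow> 'a \<Rightarrow> 'a set" where
  "gen M x = {z. \<exists>f\<in>M. \<exists>n. mpow m (m f x) n \<le> z}"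

lemma gen_filter:
  assumes M: "is_filter m M"
  shows "is_filter m (gen M x)"
  unfolding is_filter_def
proof (intro conjI allI impI)
  show "gen M x \<noteq> {}" using filter_top[OF M] unfolding gen_def
    by (auto intro!: exI[of _ top] bexI[of _ top] exI[of _ 0])
  fix a b
  show "a \<in> gen M x \<and> a \<le> b \<Longrightarrow> b \<in> gen M x"
    unfolding gen_def using order_trans by blast
  assume "a \<in> gen M x \<and> b \<in> gen M x"
  then obtain f n g k where f: "f \<in> M" "mpow m (m f x) n \<le> a" and g: "g \<in> M" "mpow m (m g x) k \<le> b"
    unfolding gen_def by blast
  define h where "h = m f g"
  have h: "h \<in> M" using M f g unfolding is_filter_def h_def by blast
  have "m h x \<le> m f x" unfolding h_def by (rule monoL[OF int1])
  then have 1: "mpow m (m h x) n \<le> a" using f mpow_mono order_trans by blast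
  have "m h x \<le> m g x" unfolding h_def by (rule monoL[OF int2])
  then have 2: "mpow m (m h x) k \<le> b" using g mpow_mono order_trans by blast
  have "mpow m (m h x) (n + k) \<le> m a b"
    unfolding mpow_add using 1 2 by (meson monoL monoR order_trans)
  then show "m a b \<in> gen M x" unfolding gen_def using h by blast
qed

lemma gen_sub: "is_filter m M \<Longrightarrow> M \<subseteq> gen M x"
  unfolding gen_def
proof
  fix f assume "f \<in> M"
  then show "f \<in> {z. \<exists>f\<in>M. \<exists>n. mpow m (m f x) n \<le> z}"
    using int1[of f x] by (auto intro!: bexI[of _ f] exI[of _ 1])
qed

lemma gen_x: "is_filter m M \<Longrightarrow> x \<in> gen M x"
  unfolding gen_def using filter_top
  by (auto intro!: bexI[of _ top] exI[of _ 1])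

lemma prime_filter_thm:
  assumes "a \<noteq> top"
  shows "\<exists>F. sup_prime_filter m F \<and> a \<notin> F"
proof -
  define S where "S = {F. is_filter m F \<and> a \<notin> F}"
  have "is_filter m {top}" unfolding is_filter_def
    by (auto simp: top.extremum_unique)
  then have top_f: "{top} \<in> S" using assms unfolding S_def by simp
  have "\<exists>M\<in>S. \<forall>X\<in>S. M \<subseteq> X \<longrightarrow> X = M"
  proof (rule subset_Zorn_nonempty)
    show "S \<noteq> {}" using top_f by blast
    fix C assume C: "C \<noteq> {}" "subset.chain S C"
    have CS: "C \<subseteq> S" and ch: "\<forall>X\<in>C. \<forall>Y\<in>C. X \<subseteq> Y \<or> Y \<subseteq> X"
      using C(2) unfolding subset.chain_def by auto
    have CF: "\<And>X. X \<in> C \<Longrightarrow> is_filter m X" using CS unfolding S_def by blast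
    have "is_filter m (\<Union>C)"
      unfolding is_filter_def
    proof (intro conjI allI impI)
      obtain X where X: "X \<in> C" using C(1) by blast
      then have "top \<in> X" using CF filter_top by blast
      then show "\<Union>C \<noteq> {}" using X by blast
      fix x y
      show "x \<in> \<Union>C \<and> x \<le> y \<Longrightarrow> y \<in> \<Union>C"
      proof -
        assume "x \<in> \<Union>C \<and> x \<le> y"
        then obtain X where X: "X \<in> C" "x \<in> X" "x \<le> y" by blast
        then have "y \<in> X" using CF filter_up by blast
        then show "y \<in> \<Union>C" using X by blast
      qed
      assume "x \<in> \<Union>C \<and> y \<in> \<Union>C"
      then obtain X Y where XY: "X \<in> C" "Y \<in> C" "x \<in> X" "y \<in> Y" by blast
      from ch XY(1,2) have "X \<subseteq> Y \<or> Y \<subseteq> X" by blast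
      then show "m x y \<in> \<Union>C"
      proof
        assume "X \<subseteq> Y"
        then have "m x y \<in> Y" using filter_mul[OF CF[OF XY(2)]] XY by blast
        then show ?thesis using XY by blast
      next
        assume "Y \<subseteq> X"
        then have "m x y \<in> X" using filter_mul[OF CF[OF XY(1)]] XY by blast
        then show ?thesis using XY by blast
      qed
    qed
    then show "\<Union>C \<in> S" using CS unfolding S_def by blast
  qed
  then obtain M where MS: "M \<in> S" and max: "\<forall>X\<in>S. M \<subseteq> X \<longrightarrow> X = M" by blast
  have Mf: "is_filter m M" and aM: "a \<notin> M" using MS unfolding S_def by auto
  have ainG: "a \<in> gen M x" if "x \<notin> M" for x
  proof (rule ccontr)
    assume "a \<notin> gen M x"
    then have "gen M x \<in> S" using gen_filter[OF Mf] unfolding S_def by blast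
    then have "gen M x = M" using max gen_sub[OF Mf] by blast
    then show False using gen_x[OF Mf] that by blast
  qed
  have "sup_prime_filter m M"
    unfolding sup_prime_filter_def
  proof (intro conjI allI impI Mf)
    fix x y assume s: "sup x y \<in> M"
    show "x \<in> M \<or> y \<in> M"
    proof (rule ccontr)
      assume "\<not> (x \<in> M \<or> y \<in> M)"
      then have "a \<in> gen M x" "a \<in> gen M y" using ainG by auto
      then obtain f n g k where f: "f \<in> M" "mpow m (m f x) n \<le> a"
        and g: "g \<in> M" "mpow m (m g y) k \<le> a"
        unfolding gen_def by blast
      define h where "h = m f g"
      have h: "h \<in> M" using filter_mul[OF Mf f(1) g(1)] unfolding h_def .
      have e: "m h (sup x y) \<in> M" using filter_mul[OF Mf h s] .
      have "m h x \<le> m f x" unfolding h_def by (rule monoL[OF int1])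
      then have 1: "mpow m (m h x) n \<le> a" using f mpow_mono order_trans by blast
      have "m h y \<le> m g y" unfolding h_def by (rule monoL[OF int2])
      then have 2: "mpow m (m h y) k \<le> a" using g mpow_mono order_trans by blast
      have "mpow m (m h (sup x y)) (n + k) \<le> a"
        using mpow_key[of "m h x" "m h y" n k] 1 2 supR by (simp add: order_trans)
      moreover have "mpow m (m h (sup x y)) (n + k) \<in> M" using mpow_in[OF Mf e] .
      ultimately show False using aM filter_up[OF Mf] by blast
    qed
  qed
  then show ?thesis using aM by blast
qed

lemma part1: "r_MTL r \<longleftrightarrow> {F. r_prime_filter m r F} = {F. sup_prime_filter m F}"
proof
  assume R: "r_MTL r"
  have "r_prime_filter m r F" if "sup_prime_filter m F" for F
    using that R filter_top unfolding r_MTL_def sup_prime_filter_def r_prime_filter_def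
    by metis
  then show "{F. r_prime_filter m r F} = {F. sup_prime_filter m F}" using r_prime_sup by blast
next
  assume E: "{F. r_prime_filter m r F} = {F. sup_prime_filter m F}"
  show "r_MTL r" unfolding r_MTL_def
  proof (intro allI, rule ccontr)
    fix x y assume "sup (r x y) (r y x) \<noteq> top"
    then obtain F where F: "sup_prime_filter m F" "sup (r x y) (r y x) \<notin> F"
      using prime_filter_thm by blast
    then have "r_prime_filter m r F" using E by blast
    then have Ff: "is_filter m F" and "r x y \<in> F \<or> r y x \<in> F"
      unfolding r_prime_filter_def by auto
    then show False using F(2) filter_up[OF Ff, of "r x y" "sup (r x y) (r y x)"]
      filter_up[OF Ff, of "r y x" "sup (r x y) (r y x)"] by auto
  qed
qed

lemma part2: "l_MTL l \<longleftrightarrow> {F. l_prime_filter m l F} = {F. sup_prime_filter m F}"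
proof
  assume R: "l_MTL l"
  have "l_prime_filter m l F" if "sup_prime_filter m F" for F
    using that R filter_top unfolding l_MTL_def sup_prime_filter_def l_prime_filter_def
    by metis
  then show "{F. l_prime_filter m l F} = {F. sup_prime_filter m F}" using l_prime_sup by blast
next
  assume E: "{F. l_prime_filter m l F} = {F. sup_prime_filter m F}"
  show "l_MTL l" unfolding l_MTL_def
  proof (intro allI, rule ccontr)
    fix x y assume "sup (l x y) (l y x) \<noteq> top"
    then obtain F where F: "sup_prime_filter m F" "sup (l x y) (l y x) \<notin> F"
      using prime_filter_thm by blast
    then have "l_prime_filter m l F" using E by blast
    then have Ff: "is_filter m F" and "l x y \<in> F \<or> l y x \<in> F"
      unfolding l_prime_filter_def by auto
    then show False using F(2) filter_up[OF Ff, of "l x y" "sup (l x y) (l y x)"]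
      filter_up[OF Ff, of "l y x" "sup (l x y) (l y x)"] by auto
  qed
qed

lemma part3: "pseudo_MTL r l \<longleftrightarrow> {F. prime_filter m r l F} = {F. sup_prime_filter m F}"
proof
  assume "pseudo_MTL r l"
  then show "{F. prime_filter m r l F} = {F. sup_prime_filter m F}"
    using part1 part2 unfolding pseudo_MTL_def prime_filter_def by blast
next
  assume E: "{F. prime_filter m r l F} = {F. sup_prime_filter m F}"
  have "{F. r_prime_filter m r F} = {F. sup_prime_filter m F}"
    using E r_prime_sup unfolding prime_filter_def by blast
  moreover have "{F. l_prime_filter m l F} = {F. sup_prime_filter m F}"
    using E l_prime_sup unfolding prime_filter_def by blast
  ultimately show "pseudo_MTL r l" using part1 part2 unfolding pseudo_MTL_def by blast
qed

end

theorem theorem5p7: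
  fixes m r l :: "'a::{semilattice_sup,order_top} \<Rightarrow> 'a \<Rightarrow> 'a"
  assumes "integral_residuated_sup_semilattice m r l"
  shows "(r_MTL r \<longleftrightarrow> {F. r_prime_filter m r F} = {F. sup_prime_filter m F})
       \<and> (l_MTL l \<longleftrightarrow> {F. l_prime_filter m l F} = {F. sup_prime_filter m F})
       \<and> (pseudo_MTL r l \<longleftrightarrow> {F. prime_filter m r l F} = {F. sup_prime_filter m F})"
  using part1[OF assms] part2[OF assms] part3[OF assms] by blast

end
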